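(* Let $\mathcal{A}\subseteq\mathcal{B}(\mathcal{H})$ be a von Neumann algebra and $T:\mathcal{A}\to\mathcal{A}$ a Markov operator. (a) An element $y\in\mathcal{A}_+$ is a potential for $T$ if and only if $T(y)\leq y$ and $T^n(y)\to 0$ in the strong operator topology as $n\to\infty$. (b) An element $a\in\mathcal{A}_+$ satisfies $T(a)\leq a$ if and only if there are a potential $y$ for $T$ and an element $h\in\mathcal{A}$ with $h\geq 0$ and $T(h)=h$ such that $a=y+h$. Such a decomposition is unique.
   Context: A von Neumann algebra $\mathcal{A}\subseteq\mathcal{B}(\mathcal{H})$ is a strongly closed *-algebra containing the identity $\mathbbm{1}$; $\mathcal{A}_+$ is its cone of positive elements. A Markov operator is a normal (i.e. preserving suprema of bounded increasing nets in $\mathcal{A}_+$), completely positive, unital linear map $T:\mathcal{A}\to\mathcal{A}$. An element $x\in\mathcal{A}_+$ is $T$-summable if $\sum_{n=0}^\infty T^n(x)$ converges (in the strong operator topology) to an element of $\mathcal{A}_+$. An element $y\in\mathcal{A}_+$ is a potential for $T$ if $y=\sum_{n=0}^\infty T^n(x)$ for some $T$-summable $x\in\mathcal{A}_+$. *)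

theory Defs
  imports "HOL-Analysis.Analysis"
begin

class chilbert = banach +
  fixes cscale :: "complex \<Rightarrow> 'a \<Rightarrow> 'a"
    and cinner :: "'a \<Rightarrow> 'a \<Rightarrow> complex"
  assumes cscale_add_right: "cscale c (x + y) = cscale c x + cscale c y"
    and cscale_add_left: "cscale (c + d) x = cscale c x + cscale d x"
    and cscale_cscale: "cscale c (cscale d x) = cscale (c * d) x"
    and cscale_one: "cscale 1 x = x"
    and cscale_of_real: "cscale (complex_of_real r) x = scaleR r x"
    and cinner_commute: "cinner x y = cnj (cinner y x)"
    and cinner_add_right: "cinner x (y + z) = cinner x y + cinner x z"
    and cinner_cscale_right: "cinner x (cscale c y) = c * cinner x y"
    and cinner_self_real: "Im (cinner x x) = 0"
    and cinner_self_nonneg: "0 \<le> Re (cinner x x)"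
    and cinner_self_zero: "cinner x x = 0 \<longleftrightarrow> x = 0"
    and norm_cinner: "norm x = sqrt (Re (cinner x x))"

type_synonym 'h op = "'h \<Rightarrow> 'h"

definition bop :: "('h::chilbert) op \<Rightarrow> bool" where
  "bop A \<longleftrightarrow> (\<forall>x y. A (x + y) = A x + A y) \<and> (\<forall>c x. A (cscale c x) = cscale c (A x))
     \<and> (\<exists>K. \<forall>x. norm (A x) \<le> K * norm x)"

definition adj :: "('h::chilbert) op \<Rightarrow> 'h op" where
  "adj A = (\<lambda>y. THE z. \<forall>x. cinner z x = cinner y (A x))"

definition op_add :: "('h::chilbert) op \<Rightarrow> 'h op \<Rightarrow> 'h op" where
  "op_add A B = (\<lambda>x. A x + B x)"

definition op_smul :: "complex \<Rightarrow> ('h::chilbert) op \<Rightarrow> 'h op" where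
  "op_smul c A = (\<lambda>x. cscale c (A x))"

definition pos_op :: "('h::chilbert) op \<Rightarrow> bool" where
  "pos_op A \<longleftrightarrow> bop A \<and> (\<forall>x. Im (cinner x (A x)) = 0 \<and> 0 \<le> Re (cinner x (A x)))"

definition op_le :: "('h::chilbert) op \<Rightarrow> 'h op \<Rightarrow> bool" where
  "op_le A B \<longleftrightarrow> pos_op (\<lambda>x. B x - A x)"

text \<open>Closedness in the strong operator topology: every bounded operator lying in the
SOT-closure (basic neighbourhoods given by finitely many vectors and \<open>\<epsilon> > 0\<close>) belongs to the set.\<close>
definition sot_closed :: "('h::chilbert) op set \<Rightarrow> bool" where
  "sot_closed S \<longleftrightarrow> (\<forall>B. bop B \<and>
      (\<forall>F e. finite F \<and> e > 0 \<longrightarrow> (\<exists>A\<in>S. \<forall>x\<in>F. norm (A x - B x) < e)) \<longrightarrow> B \<in> S)"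

definition von_neumann_algebra :: "('h::chilbert) op set \<Rightarrow> bool" where
  "von_neumann_algebra \<A> \<longleftrightarrow>
     (\<forall>A\<in>\<A>. bop A) \<and> id \<in> \<A> \<and>
     (\<forall>A\<in>\<A>. \<forall>B\<in>\<A>. op_add A B \<in> \<A>) \<and>
     (\<forall>c. \<forall>A\<in>\<A>. op_smul c A \<in> \<A>) \<and>
     (\<forall>A\<in>\<A>. \<forall>B\<in>\<A>. A \<circ> B \<in> \<A>) \<and>
     (\<forall>A\<in>\<A>. adj A \<in> \<A>) \<and>
     sot_closed \<A>"

definition pos_part :: "('h::chilbert) op set \<Rightarrow> 'h op set" where
  "pos_part \<A> = {A \<in> \<A>. pos_op A}"

text \<open>Positivity of an \<open>n \<times> n\<close> matrix of operators, viewed as an operator on \<open>H\<^sup>n\<close>.\<close>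
definition mat_pos :: "nat \<Rightarrow> (nat \<Rightarrow> nat \<Rightarrow> ('h::chilbert) op) \<Rightarrow> bool" where
  "mat_pos n M \<longleftrightarrow> (\<forall>x :: nat \<Rightarrow> 'h.
     Im (\<Sum>i<n. \<Sum>j<n. cinner (x i) (M i j (x j))) = 0 \<and>
     0 \<le> Re (\<Sum>i<n. \<Sum>j<n. cinner (x i) (M i j (x j))))"

definition completely_positive :: "('h::chilbert) op set \<Rightarrow> ('h op \<Rightarrow> 'h op) \<Rightarrow> bool" where
  "completely_positive \<A> T \<longleftrightarrow> (\<forall>n M. (\<forall>i<n. \<forall>j<n. M i j \<in> \<A>) \<and> mat_pos n M
       \<longrightarrow> mat_pos n (\<lambda>i j. T (M i j)))"

definition is_lub_in :: "('h::chilbert) op set \<Rightarrow> 'h op set \<Rightarrow> 'h op \<Rightarrow> bool" where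
  "is_lub_in \<A> D s \<longleftrightarrow> s \<in> \<A> \<and> (\<forall>d\<in>D. op_le d s) \<and>
     (\<forall>u\<in>\<A>. (\<forall>d\<in>D. op_le d u) \<longrightarrow> op_le s u)"

text \<open>Normality: preservation of suprema of bounded increasing nets in \<open>\<A>\<^sub>+\<close>
(a net is represented by its range, an upward directed set).\<close>
definition normal_map :: "('h::chilbert) op set \<Rightarrow> ('h op \<Rightarrow> 'h op) \<Rightarrow> bool" where
  "normal_map \<A> T \<longleftrightarrow> (\<forall>D s. D \<subseteq> pos_part \<A> \<and> D \<noteq> {} \<and>
       (\<forall>a\<in>D. \<forall>b\<in>D. \<exists>c\<in>D. op_le a c \<and> op_le b c) \<and>
       (\<exists>K::real. \<forall>d\<in>D. op_le d (op_smul (complex_of_real K) id)) \<and>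
       is_lub_in \<A> D s \<longrightarrow> is_lub_in \<A> (T ` D) (T s))"

definition markov_operator :: "('h::chilbert) op set \<Rightarrow> ('h op \<Rightarrow> 'h op) \<Rightarrow> bool" where
  "markov_operator \<A> T \<longleftrightarrow>
     (\<forall>A\<in>\<A>. T A \<in> \<A>) \<and>
     (\<forall>A\<in>\<A>. \<forall>B\<in>\<A>. T (op_add A B) = op_add (T A) (T B)) \<and>
     (\<forall>c. \<forall>A\<in>\<A>. T (op_smul c A) = op_smul c (T A)) \<and>
     T id = id \<and>
     completely_positive \<A> T \<and> normal_map \<A> T"

definition sot_series_to :: "(('h::chilbert) op \<Rightarrow> 'h op) \<Rightarrow> 'h op \<Rightarrow> 'h op \<Rightarrow> bool" where
  "sot_series_to T x y \<longleftrightarrow> (\<forall>v. (\<lambda>N. \<Sum>n<N. (T ^^ n) x v) \<longlonglongrightarrow> y v)"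

definition T_summable :: "('h::chilbert) op set \<Rightarrow> ('h op \<Rightarrow> 'h op) \<Rightarrow> 'h op \<Rightarrow> bool" where
  "T_summable \<A> T x \<longleftrightarrow> x \<in> pos_part \<A> \<and> (\<exists>y \<in> pos_part \<A>. sot_series_to T x y)"

definition potential :: "('h::chilbert) op set \<Rightarrow> ('h op \<Rightarrow> 'h op) \<Rightarrow> 'h op \<Rightarrow> bool" where
  "potential \<A> T y \<longleftrightarrow> y \<in> pos_part \<A> \<and> (\<exists>x. T_summable \<A> T x \<and> sot_series_to T x y)"

end

theory Submission
  imports Defs
begin



lemma cscale_zero_right[simp]: "cscale c (0::'a::chilbert) = 0"
  using cscale_add_right[of c 0 0] by simp

lemma cscale_minus_right: "cscale c (- x) = - cscale c (x::'a::chilbert)"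
  using cscale_add_right[of c x "-x"] by (simp add: add_eq_0_iff2)

lemma cscale_diff_right: "cscale c (x - y) = cscale c x - cscale c (y::'a::chilbert)"
  using cscale_add_right[of c x "-y"] cscale_minus_right[of c y] by simp

lemma cscale_zero_left[simp]: "cscale 0 (x::'a::chilbert) = 0"
  using cscale_of_real[of 0 x] by simp

lemma cscale_minus1[simp]: "cscale (-1) (x::'a::chilbert) = - x"
  using cscale_of_real[of "-1" x] by simp

lemma cinner_zero_right[simp]: "cinner (x::'a::chilbert) 0 = 0"
  using cinner_add_right[of x 0 0] by simp

lemma cinner_zero_left[simp]: "cinner 0 (x::'a::chilbert) = 0"
  using cinner_commute[of 0 x] by simp

lemma cinner_add_left: "cinner (x + y) z = cinner x z + cinner y (z::'a::chilbert)"
  using cinner_commute[of "x+y" z] cinner_add_right[of z x y] cinner_commute[of x z] cinner_commute[of y z]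
  by simp

lemma cinner_cscale_left: "cinner (cscale c x) y = cnj c * cinner x (y::'a::chilbert)"
  using cinner_commute[of "cscale c x" y] cinner_cscale_right[of y c x] cinner_commute[of x y]
  by simp

lemma cinner_minus_right: "cinner x (- y) = - cinner x (y::'a::chilbert)"
  using cinner_add_right[of x y "-y"] by (simp add: add_eq_0_iff2)

lemma cinner_diff_right: "cinner x (y - z) = cinner x y - cinner x (z::'a::chilbert)"
  using cinner_add_right[of x y "-z"] cinner_minus_right[of x z] by simp

lemma cinner_minus_left: "cinner (- y) x = - cinner y (x::'a::chilbert)"
  using cinner_add_left[of y "-y" x] by (simp add: add_eq_0_iff2)

lemma cinner_diff_left: "cinner (y - z) x = cinner y x - cinner z (x::'a::chilbert)"
  using cinner_add_left[of y "-z" x] cinner_minus_left[of z x] by simp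

lemma cinner_self: "cinner x x = complex_of_real ((norm (x::'a::chilbert))\<^sup>2)"
proof -
  have "(norm x)\<^sup>2 = Re (cinner x x)" using norm_cinner[of x] cinner_self_nonneg[of x] by simp
  then show ?thesis using cinner_self_real[of x] by (simp add: complex_eq_iff)
qed

lemma zcnj: "z * cnj z = complex_of_real ((cmod z)\<^sup>2)" "cnj z * z = complex_of_real ((cmod z)\<^sup>2)"
  using complex_norm_square[of z] by (simp_all add: mult.commute)

lemma form_herm:
  fixes q :: "'a::chilbert \<Rightarrow> 'a \<Rightarrow> complex"
  assumes addr: "\<And>u v w. q u (v + w) = q u v + q u w"
    and addl: "\<And>u v w. q (u + v) w = q u w + q v w"
    and scr: "\<And>c u v. q u (cscale c v) = c * q u v"
    and scl: "\<And>c u v. q (cscale c u) v = cnj c * q u v"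
    and pos: "\<And>w. Im (q w w) = 0"
  shows "q v u = cnj (q u v)"
proof -
  have e1: "q (u+v) (u+v) = q u u + q u v + q v u + q v v" by (simp add: addl addr)
  have e2: "q (u + cscale \<i> v) (u + cscale \<i> v) = q u u + \<i> * q u v - \<i> * q v u + q v v"
    by (simp add: addl addr scl scr algebra_simps)
  have "Im (q u v + q v u) = 0" using pos[of "u+v"] pos[of u] pos[of v] e1 by simp
  moreover have "Re (q u v - q v u) = 0" using pos[of "u + cscale \<i> v"] pos[of u] pos[of v] e2 by simp
  ultimately show ?thesis by (simp add: complex_eq_iff)
qed

lemma form_cs:
  fixes q :: "'a::chilbert \<Rightarrow> 'a \<Rightarrow> complex"
  assumes addr: "\<And>u v w. q u (v + w) = q u v + q u w"
    and addl: "\<And>u v w. q (u + v) w = q u w + q v w"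
    and scr: "\<And>c u v. q u (cscale c v) = c * q u v"
    and scl: "\<And>c u v. q (cscale c u) v = cnj c * q u v"
    and pos: "\<And>w. Im (q w w) = 0 \<and> 0 \<le> Re (q w w)"
  shows "(cmod (q u v))\<^sup>2 \<le> Re (q u u) * Re (q v v)"
proof -
  have herm: "\<And>u v. q v u = cnj (q u v)"
    by (rule form_herm[OF addr addl scr scl]) (use pos in auto)
  have minus: "\<And>u v. q u (- v) = - q u v" using scr[where c="-1"] by simp
  have minusl: "\<And>u v. q (- u) v = - q u v" using scl[where c="-1"] by simp
  define A where "A = Re (q u u)"
  define B where "B = Re (q v v)"
  define a where "a = (cmod (q u v))\<^sup>2"
  have key: "0 \<le> A - 2 * t * a + t\<^sup>2 * a * B" for t :: real
  proof -
    define s where "s = complex_of_real t * q v u"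
    have dl: "q (x - cscale s y) w = q x w - cnj s * q y w" for x y w
    proof -
      have "q (x - cscale s y) w = q (x + - cscale s y) w" by simp
      also have "\<dots> = q x w - cnj s * q y w" by (simp only: addl minusl scl) simp
      finally show ?thesis .
    qed
    have dr: "q w (x - cscale s y) = q w x - s * q w y" for x y w
    proof -
      have "q w (x - cscale s y) = q w (x + - cscale s y)" by simp
      also have "\<dots> = q w x - s * q w y" by (simp only: addr minus scr) simp
      finally show ?thesis .
    qed
    have "q (u - cscale s v) (u - cscale s v) = q u u - s * q u v - cnj s * q v u + (cnj s * s) * q v v"
      unfolding dl dr by (simp add: algebra_simps)
    also have "s * q u v = complex_of_real (t * a)"
      proof -
      have "s * q u v = complex_of_real t * (cnj (q u v) * q u v)" unfolding s_def herm[of u v] by simp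
      also have "cnj (q u v) * q u v = complex_of_real ((cmod (q u v))\<^sup>2)" by (rule zcnj(2))
      finally show ?thesis unfolding a_def by simp
    qed
    also have "cnj s * q v u = complex_of_real (t * a)"
      proof -
      have "cnj s * q v u = complex_of_real t * (cnj (q v u) * q v u)" unfolding s_def by simp
      also have "cnj (q v u) * q v u = complex_of_real ((cmod (q v u))\<^sup>2)" by (rule zcnj(2))
      also have "cmod (q v u) = cmod (q u v)" using herm[of u v] by simp
      finally show ?thesis unfolding a_def by simp
    qed
    also have "cnj s * s = complex_of_real (t\<^sup>2 * a)"
    proof -
      have "cnj s * s = complex_of_real (t\<^sup>2) * (q v u * cnj (q v u))" unfolding s_def
        by (simp add: power2_eq_square algebra_simps)
      also have "q v u * cnj (q v u) = complex_of_real ((cmod (q v u))\<^sup>2)" by (rule zcnj(1))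
      also have "cmod (q v u) = cmod (q u v)" using herm[of u v] by simp
      finally show ?thesis unfolding a_def by simp
    qed
    finally have "Re (q (u - cscale s v) (u - cscale s v)) = A - 2 * t * a + t\<^sup>2 * a * B"
      using pos[of v] unfolding A_def B_def by simp
    then show ?thesis using pos[of "u - cscale s v"] by simp
  qed
  have A0: "A \<ge> 0" "B \<ge> 0" using pos unfolding A_def B_def by auto
  have a0: "a \<ge> 0" unfolding a_def by simp
  show ?thesis
  proof (cases "B = 0")
    case True
    show ?thesis
    proof (rule ccontr)
      assume "\<not> ?thesis"
      then have "a > 0" using True unfolding a_def A_def B_def by simp
      then have "0 \<le> A - 2 * ((A+1)/a) * a" using key[of "(A+1)/a"] True by simp
      then show False using \<open>a > 0\<close> A0 by simp
    qed
  next
    case False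
    then have Bp: "B > 0" using A0 by simp
    have "0 \<le> A - 2 * (1/B) * a + (1/B)\<^sup>2 * a * B" using key[of "1/B"] .
    also have "\<dots> = A - a / B" using Bp by (simp add: power2_eq_square field_simps)
    finally have "a \<le> A * B" using Bp by (simp add: field_simps)
    then show ?thesis unfolding a_def A_def B_def by simp
  qed
qed

lemma cinner_cs: "cmod (cinner x y) \<le> norm x * norm (y::'a::chilbert)"
proof -
  have "(cmod (cinner x y))\<^sup>2 \<le> Re (cinner x x) * Re (cinner y y)"
    by (rule form_cs) (auto simp: cinner_add_right cinner_add_left cinner_cscale_right
          cinner_cscale_left cinner_self_real cinner_self_nonneg)
  also have "\<dots> = (norm x * norm y)\<^sup>2" by (simp add: cinner_self power_mult_distrib)
  finally show ?thesis using power2_le_imp_le by (metis mult_nonneg_nonneg norm_ge_zero)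
qed

lemma norm_cscale: "norm (cscale c (x::'a::chilbert)) = cmod c * norm x"
proof -
  have "complex_of_real ((norm (cscale c x))\<^sup>2) = cnj c * c * complex_of_real ((norm x)\<^sup>2)"
    using cinner_self[of "cscale c x", symmetric] cinner_self[of x]
    by (simp add: cinner_cscale_left cinner_cscale_right mult.assoc)
  also have "cnj c * c = complex_of_real ((cmod c)\<^sup>2)" by (rule zcnj(2))
  finally have "(norm (cscale c x))\<^sup>2 = (cmod c * norm x)\<^sup>2"
    by (metis of_real_eq_iff of_real_mult power_mult_distrib)
  then show ?thesis by (simp add: power2_eq_iff_nonneg)
qed

lemma bounded_linear_cinner: "bounded_linear (cinner (v::'a::chilbert))"
proof
  show "cinner v (x + y) = cinner v x + cinner v y" for x y by (rule cinner_add_right)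
  show "cinner v (r *\<^sub>R x) = r *\<^sub>R cinner v x" for r x
    using cinner_cscale_right[of v "complex_of_real r" x] by (simp add: cscale_of_real scaleR_conv_of_real)
  show "\<exists>K. \<forall>x. norm (cinner v x) \<le> norm x * K"
    using cinner_cs[of v] by (metis mult.commute)
qed

lemma bounded_linear_cscale: "bounded_linear (cscale c :: 'a::chilbert \<Rightarrow> 'a)"
proof
  show "cscale c (x + y) = cscale c x + cscale c y" for x y by (rule cscale_add_right)
  show "cscale c (r *\<^sub>R x) = r *\<^sub>R cscale c x" for r x
    by (simp add: cscale_of_real[symmetric] cscale_cscale mult.commute)
  show "\<exists>K. \<forall>x. norm (cscale c x) \<le> norm x * K"
    using norm_cscale[of c] by (metis mult.commute order_refl)
qed




lemma bopD:
  assumes "bop A"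
  shows "A (x + y) = A x + A y" "A (cscale c x) = cscale c (A x)"
  using assms unfolding bop_def by auto

lemma bop_zero: "bop A \<Longrightarrow> A 0 = 0"
  using bopD(1)[of A 0 0] by simp

lemma bop_minus: "bop A \<Longrightarrow> A (- x) = - A x"
  using bopD(1)[of A x "-x"] bop_zero[of A] by (simp add: add_eq_0_iff2)

lemma bop_diff_arg: "bop A \<Longrightarrow> A (x - y) = A x - A y"
  using bopD(1)[of A x "-y"] bop_minus[of A y] by simp

lemma bop_bound: "bop A \<Longrightarrow> \<exists>K\<ge>0. \<forall>x. norm (A x) \<le> K * norm x"
proof -
  assume "bop A"
  then obtain K where K: "\<forall>x. norm (A x) \<le> K * norm x" unfolding bop_def by auto
  have "norm (A x) \<le> max K 0 * norm x" for x
  proof -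
    have "K * norm x \<le> max K 0 * norm x" by (rule mult_right_mono) auto
    then show ?thesis using K[rule_format, of x] by linarith
  qed
  then show ?thesis by (intro exI[of _ "max K 0"]) auto
qed

lemma bop_add: "bop A \<Longrightarrow> bop B \<Longrightarrow> bop (\<lambda>x. A x + B x)"
proof -
  assume a: "bop A" "bop B"
  obtain K1 where K1: "K1 \<ge> 0" "\<forall>x. norm (A x) \<le> K1 * norm x" using bop_bound[OF a(1)] by auto
  obtain K2 where K2: "K2 \<ge> 0" "\<forall>x. norm (B x) \<le> K2 * norm x" using bop_bound[OF a(2)] by auto
  have "norm (A x + B x) \<le> (K1 + K2) * norm x" for x
    using norm_triangle_ineq[of "A x" "B x"] K1(2)[rule_format, of x] K2(2)[rule_format, of x]
    by (simp add: distrib_right)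
  moreover have "A (x + y) + B (x + y) = A x + B x + (A y + B y)" for x y
    using a by (simp add: bopD algebra_simps)
  moreover have "A (cscale c x) + B (cscale c x) = cscale c (A x + B x)" for c x
    using a by (simp add: bopD cscale_add_right)
  ultimately show ?thesis unfolding bop_def by blast
qed

lemma bop_scale: "bop A \<Longrightarrow> bop (\<lambda>x. cscale c (A x))"
proof -
  assume a: "bop A"
  obtain K1 where K1: "K1 \<ge> 0" "\<forall>x. norm (A x) \<le> K1 * norm x" using bop_bound[OF a] by auto
  have "norm (cscale c (A x)) \<le> (cmod c * K1) * norm x" for x
    using K1(2)[rule_format, of x] by (simp add: norm_cscale mult.assoc mult_left_mono)
  moreover have "cscale c (A (x + y)) = cscale c (A x) + cscale c (A y)" for x y
    using a by (simp add: bopD cscale_add_right)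
  moreover have "cscale c (A (cscale d x)) = cscale d (cscale c (A x))" for d x
    using a by (simp add: bopD cscale_cscale mult.commute)
  ultimately show ?thesis unfolding bop_def by blast
qed

lemma bop_diff: "bop A \<Longrightarrow> bop B \<Longrightarrow> bop (\<lambda>x. A x - B x)"
  using bop_add[of A "\<lambda>x. cscale (-1) (B x)"] bop_scale[of B "-1"] by simp

lemma bop_id: "bop id"
  unfolding bop_def by (auto intro: exI[of _ 1])

lemma bop_cinner_bound: "bop A \<Longrightarrow> \<exists>K\<ge>0. \<forall>x. Re (cinner x (A x)) \<le> K * (norm x)\<^sup>2"
proof -
  assume "bop A"
  then obtain K where K: "K \<ge> 0" "\<forall>x. norm (A x) \<le> K * norm x" using bop_bound by blast
  have "Re (cinner x (A x)) \<le> K * (norm x)\<^sup>2" for x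
  proof -
    have "Re (cinner x (A x)) \<le> cmod (cinner x (A x))" by (rule complex_Re_le_cmod)
    also have "\<dots> \<le> norm x * norm (A x)" by (rule cinner_cs)
    also have "\<dots> \<le> norm x * (K * norm x)" using K(2) by (simp add: mult_left_mono)
    finally show ?thesis by (simp add: power2_eq_square algebra_simps)
  qed
  then show ?thesis using K(1) by blast
qed

lemma pos_opD: "pos_op Q \<Longrightarrow> bop Q" "pos_op Q \<Longrightarrow> Im (cinner x (Q x)) = 0"
  "pos_op Q \<Longrightarrow> 0 \<le> Re (cinner x (Q x))"
  unfolding pos_op_def by auto

lemma pos_form_cs:
  assumes "pos_op Q"
  shows "(cmod (cinner u (Q v)))\<^sup>2 \<le> Re (cinner u (Q u)) * Re (cinner v (Q v))"
proof (rule form_cs)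
  have b: "bop Q" using assms by (rule pos_opD)
  show "cinner u (Q (v + w)) = cinner u (Q v) + cinner u (Q w)" for u v w
    using b by (simp add: bopD cinner_add_right)
  show "cinner (u + v) (Q w) = cinner u (Q w) + cinner v (Q w)" for u v w
    by (simp add: cinner_add_left)
  show "cinner u (Q (cscale c v)) = c * cinner u (Q v)" for c u v
    using b by (simp add: bopD cinner_cscale_right)
  show "cinner (cscale c u) (Q v) = cnj c * cinner u (Q v)" for c u v
    by (simp add: cinner_cscale_left)
  show "Im (cinner w (Q w)) = 0 \<and> 0 \<le> Re (cinner w (Q w))" for w
    using assms by (simp add: pos_opD)
qed

lemma pos_zero:
  assumes "pos_op Q" "\<And>v. Re (cinner v (Q v)) = 0"
  shows "Q v = 0"
proof -
  have "(cmod (cinner (Q v) (Q v)))\<^sup>2 \<le> 0"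
    using pos_form_cs[OF assms(1), of "Q v" v] assms(2)[of v] by simp
  then have "cinner (Q v) (Q v) = 0" by simp
  then show ?thesis using cinner_self_zero by blast
qed


lemma op_le_antisym:
  assumes "op_le A B" "op_le B A"
  shows "A = B"
proof
  fix v
  have p1: "pos_op (\<lambda>x. B x - A x)" and p2: "pos_op (\<lambda>x. A x - B x)"
    using assms unfolding op_le_def by auto
  have "Re (cinner w (B w - A w)) = 0" for w
  proof -
    have "Re (cinner w (A w - B w)) = - Re (cinner w (B w - A w))"
      by (simp add: cinner_diff_right)
    then show ?thesis using pos_opD(3)[OF p1, of w] pos_opD(3)[OF p2, of w] by simp
  qed
  then have "B v - A v = 0" using pos_zero[OF p1] by simp
  then show "A v = B v" by simp
qed

lemma pos_op_add: "pos_op A \<Longrightarrow> pos_op B \<Longrightarrow> pos_op (\<lambda>x. A x + B x)"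
  unfolding pos_op_def by (auto simp: bop_add cinner_add_right)

lemma op_le_trans:
  assumes "op_le A B" "op_le B C"
  shows "op_le A C"
proof -
  have "pos_op (\<lambda>x. (C x - B x) + (B x - A x))"
    using assms unfolding op_le_def by (rule pos_op_add[rotated])
  then show ?thesis unfolding op_le_def by simp
qed

lemma pos_op_zero: "pos_op (\<lambda>x. 0)"
  unfolding pos_op_def bop_def by (auto intro: exI[of _ 0])

lemma op_le_refl: "op_le A A"
  unfolding op_le_def using pos_op_zero by simp

lemma op_le_bop: "op_le A B \<Longrightarrow> bop (\<lambda>x. B x - A x)"
  unfolding op_le_def pos_op_def by auto

lemma pos_key:
  assumes "pos_op B" "\<And>w. Re (cinner w (B w)) \<le> K * (norm w)\<^sup>2"
  shows "(norm (B v))\<^sup>2 \<le> K * Re (cinner v (B v))"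
proof -
  define n where "n = norm (B v)"
  define R where "R = Re (cinner v (B v))"
  have R0: "R \<ge> 0" unfolding R_def using assms(1) by (rule pos_opD)
  have KR: "0 \<le> K * R"
  proof (cases "K \<ge> 0")
    case True then show ?thesis using R0 by simp
  next
    case False
    then have "K * (norm v)\<^sup>2 \<le> 0" by (intro mult_nonpos_nonneg) auto
    then have "R \<le> 0" using assms(2)[of v] unfolding R_def by linarith
    then show ?thesis using R0 by simp
  qed
  have "(cmod (cinner (B v) (B v)))\<^sup>2 \<le> Re (cinner (B v) (B (B v))) * R"
    using pos_form_cs[OF assms(1), of "B v" v] unfolding R_def .
  also have "\<dots> \<le> K * n\<^sup>2 * R" unfolding n_def using assms(2)[of "B v"] R0 by (simp add: mult_right_mono)
  finally have "n\<^sup>2 * n\<^sup>2 \<le> n\<^sup>2 * (K * R)" unfolding n_def by (simp add: cinner_self power2_eq_square norm_mult ac_simps)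
  then show ?thesis
  proof (cases "n = 0")
    case True then show ?thesis using KR unfolding n_def R_def by simp
  next
    case False
    then have "n\<^sup>2 > 0" by simp
    then have "n\<^sup>2 \<le> K * R" using \<open>n\<^sup>2 * n\<^sup>2 \<le> n\<^sup>2 * (K * R)\<close>
      by (meson mult_le_cancel_left_pos)
    then show ?thesis unfolding n_def R_def .
  qed
qed

lemma pos_limit:
  assumes "bop Q" "\<And>x. (\<lambda>n. F n x) \<longlonglongrightarrow> Q x"
    and "\<And>x. eventually (\<lambda>n. Im (cinner x (F n x)) = 0 \<and> 0 \<le> Re (cinner x (F n x))) sequentially"
  shows "pos_op Q"
  unfolding pos_op_def
proof (intro conjI allI assms(1))
  fix x
  have lim: "(\<lambda>n. cinner x (F n x)) \<longlonglongrightarrow> cinner x (Q x)"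
    using bounded_linear.tendsto[OF bounded_linear_cinner assms(2)] .
  have i: "(\<lambda>n. Im (cinner x (F n x))) \<longlonglongrightarrow> Im (cinner x (Q x))" using tendsto_Im[OF lim] .
  have e1: "eventually (\<lambda>n. Im (cinner x (F n x)) \<le> 0) sequentially"
    using assms(3)[of x] by (rule eventually_mono) simp
  have e2: "eventually (\<lambda>n. 0 \<le> Im (cinner x (F n x))) sequentially"
    using assms(3)[of x] by (rule eventually_mono) simp
  have "Im (cinner x (Q x)) \<le> 0" using tendsto_upperbound[OF i e1] by simp
  moreover have "0 \<le> Im (cinner x (Q x))" using tendsto_lowerbound[OF i e2] by simp
  ultimately show "Im (cinner x (Q x)) = 0" by simp
  have r: "(\<lambda>n. Re (cinner x (F n x))) \<longlonglongrightarrow> Re (cinner x (Q x))" using tendsto_Re[OF lim] .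
  have e3: "eventually (\<lambda>n. 0 \<le> Re (cinner x (F n x))) sequentially"
    using assms(3)[of x] by (rule eventually_mono) simp
  show "0 \<le> Re (cinner x (Q x))" using tendsto_lowerbound[OF r e3] by simp
qed




lemma incr_le:
  assumes "\<And>n. op_le (f n) (f (Suc n))" "\<And>n. bop (f n)" "m \<le> n"
  shows "op_le (f m) (f n)"
proof -
  have "op_le (f m) (f (m + k))" for k
  proof (induction k)
    case 0 then show ?case by (simp add: op_le_refl)
  next
    case (Suc k) then show ?case using op_le_trans assms(1)[of "m+k"] by simp
  qed
  then show ?thesis using assms(3) le_Suc_ex by blast
qed

lemma lub_unique: "is_lub_in A D s \<Longrightarrow> is_lub_in A D s' \<Longrightarrow> s = s'"
  unfolding is_lub_in_def by (blast intro: op_le_antisym)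

lemma pos_le_scalar:
  assumes "pos_op g"
  shows "\<exists>K. op_le g (op_smul (complex_of_real K) id)"
proof -
  obtain K where K: "K \<ge> 0" "\<forall>x. Re (cinner x (g x)) \<le> K * (norm x)\<^sup>2"
    using bop_cinner_bound[OF pos_opD(1)[OF assms]] by blast
  have "pos_op (\<lambda>x. op_smul (complex_of_real K) id x - g x)"
    unfolding pos_op_def
  proof (intro conjI allI)
    show "bop (\<lambda>x. op_smul (complex_of_real K) id x - g x)"
      unfolding op_smul_def by (intro bop_diff bop_scale[OF bop_id] pos_opD(1)[OF assms])
    fix x
    have e: "cinner x (op_smul (complex_of_real K) id x - g x) =
          complex_of_real (K * (norm x)\<^sup>2) - cinner x (g x)"
      unfolding op_smul_def by (simp add: cinner_diff_right cinner_cscale_right cinner_self)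
    show "Im (cinner x (op_smul (complex_of_real K) id x - g x)) = 0"
      unfolding e using pos_opD(2)[OF assms] by simp
    show "0 \<le> Re (cinner x (op_smul (complex_of_real K) id x - g x))"
      unfolding e using K(2) by simp
  qed
  then show ?thesis unfolding op_le_def by blast
qed

locale mk =
  fixes A :: "('h::chilbert) op set" and T :: "'h op \<Rightarrow> 'h op"
  assumes vn: "von_neumann_algebra A" and mo: "markov_operator A T"
begin

lemma inA_bop: "X \<in> A \<Longrightarrow> bop X"
  using vn unfolding von_neumann_algebra_def by blast

lemma id_in: "id \<in> A"
  using vn unfolding von_neumann_algebra_def by blast

lemma inA_add: "X \<in> A \<Longrightarrow> Y \<in> A \<Longrightarrow> (\<lambda>x. X x + Y x) \<in> A"
  using vn unfolding von_neumann_algebra_def op_add_def by blast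

lemma inA_scale: "X \<in> A \<Longrightarrow> (\<lambda>x. cscale c (X x)) \<in> A"
  using vn unfolding von_neumann_algebra_def op_smul_def by blast

lemma inA_diff: "X \<in> A \<Longrightarrow> Y \<in> A \<Longrightarrow> (\<lambda>x. X x - Y x) \<in> A"
  using inA_add[of X "\<lambda>x. cscale (-1) (Y x)"] inA_scale[of Y "-1"] by simp

lemma inA_zero: "(\<lambda>x. 0) \<in> A"
  using inA_scale[OF id_in, of 0] by simp

lemma T_in: "X \<in> A \<Longrightarrow> T X \<in> A"
  using mo unfolding markov_operator_def by blast

lemma T_id: "T id = id"
  using mo unfolding markov_operator_def by blast

lemma T_add: "X \<in> A \<Longrightarrow> Y \<in> A \<Longrightarrow> T (\<lambda>x. X x + Y x) = (\<lambda>x. T X x + T Y x)"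
  using mo unfolding markov_operator_def op_add_def by blast

lemma T_scale: "X \<in> A \<Longrightarrow> T (\<lambda>x. cscale c (X x)) = (\<lambda>x. cscale c (T X x))"
  using mo unfolding markov_operator_def op_smul_def by blast

lemma T_diff: "X \<in> A \<Longrightarrow> Y \<in> A \<Longrightarrow> T (\<lambda>x. X x - Y x) = (\<lambda>x. T X x - T Y x)"
  using T_add[of X "\<lambda>x. cscale (-1) (Y x)"] T_scale[of Y "-1"] inA_scale[of Y "-1"] by simp

lemma T_pos: "X \<in> A \<Longrightarrow> pos_op X \<Longrightarrow> pos_op (T X)"
proof -
  assume a: "X \<in> A" "pos_op X"
  have cp: "completely_positive A T" using mo unfolding markov_operator_def by blast
  have "mat_pos 1 (\<lambda>i j. X)" unfolding mat_pos_def using pos_opD(2,3)[OF a(2)] by simp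
  then have m: "mat_pos 1 (\<lambda>i j. T X)"
    using cp a(1) unfolding completely_positive_def by (elim allE impE) simp_all
  show "pos_op (T X)" unfolding pos_op_def
  proof (intro conjI allI)
    show "bop (T X)" using inA_bop T_in a by blast
    fix x
    have "Im (cinner x (T X x)) = 0 \<and> 0 \<le> Re (cinner x (T X x))"
      using spec[OF m[unfolded mat_pos_def], of "\<lambda>_. x"] by simp
    then show "Im (cinner x (T X x)) = 0" "0 \<le> Re (cinner x (T X x))" by simp_all
  qed
qed

lemma T_mono: "X \<in> A \<Longrightarrow> Y \<in> A \<Longrightarrow> op_le X Y \<Longrightarrow> op_le (T X) (T Y)"
  unfolding op_le_def using T_pos[of "\<lambda>x. Y x - X x"] T_diff[of Y X] inA_diff[of Y X] by simp

lemma Tn_in: "X \<in> A \<Longrightarrow> (T ^^ n) X \<in> A"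
  by (induction n) (auto simp: T_in)

lemma Tn_add: "X \<in> A \<Longrightarrow> Y \<in> A \<Longrightarrow> (T ^^ n) (\<lambda>x. X x + Y x) = (\<lambda>x. (T ^^ n) X x + (T ^^ n) Y x)"
  by (induction n) (auto simp: T_add Tn_in)

lemma Tn_diff: "X \<in> A \<Longrightarrow> Y \<in> A \<Longrightarrow> (T ^^ n) (\<lambda>x. X x - Y x) = (\<lambda>x. (T ^^ n) X x - (T ^^ n) Y x)"
  by (induction n) (auto simp: T_diff Tn_in)

lemma Tn_pos: "X \<in> A \<Longrightarrow> pos_op X \<Longrightarrow> pos_op ((T ^^ n) X)"
  by (induction n) (auto simp: T_pos Tn_in)

lemma Tn_mono: "X \<in> A \<Longrightarrow> Y \<in> A \<Longrightarrow> op_le X Y \<Longrightarrow> op_le ((T ^^ n) X) ((T ^^ n) Y)"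
  by (induction n) (auto simp: T_mono Tn_in)

lemma Tn_fix: "T X = X \<Longrightarrow> (T ^^ n) X = X"
  by (induction n) auto

lemma inA_limit:
  assumes "bop H" "\<And>x. (\<lambda>n. f n x) \<longlonglongrightarrow> H x" "\<And>n. f n \<in> A"
  shows "H \<in> A"
proof -
  have sc: "sot_closed A" using vn unfolding von_neumann_algebra_def by blast
  have "\<exists>X\<in>A. \<forall>x\<in>F. norm (X x - H x) < e" if "finite F" "e > 0" for F e
  proof -
    have "\<forall>x\<in>F. eventually (\<lambda>n. norm (f n x - H x) < e) sequentially"
      using assms(2) that(2) by (auto simp: LIMSEQ_iff eventually_sequentially)
    then have "eventually (\<lambda>n. \<forall>x\<in>F. norm (f n x - H x) < e) sequentially"
      by (rule eventually_ball_finite[OF that(1)])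
    then obtain N where "\<forall>x\<in>F. norm (f N x - H x) < e" by (auto simp: eventually_sequentially)
    then show ?thesis using assms(3)[of N] by blast
  qed
  then show ?thesis using sc assms(1) unfolding sot_closed_def by blast
qed

lemma lub_incr:
  assumes fA: "\<And>n. f n \<in> A" and inc: "\<And>n. op_le (f n) (f (Suc n))" and gA: "g \<in> A"
    and lim: "\<And>v. (\<lambda>n. f n v) \<longlonglongrightarrow> g v"
  shows "is_lub_in A (range f) g" "\<And>n. op_le (f n) g"
proof -
  have fb: "\<And>n. bop (f n)" using fA inA_bop by blast
  have gb: "bop g" using gA inA_bop by blast
  show le: "op_le (f n) g" for n
    unfolding op_le_def
  proof (rule pos_limit[where F = "\<lambda>m x. f m x - f n x"])
    show "bop (\<lambda>x. g x - f n x)" using gb fb by (rule bop_diff)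
    show "(\<lambda>m. f m x - f n x) \<longlonglongrightarrow> g x - f n x" for x using lim by (intro tendsto_intros)
    show "eventually (\<lambda>m. Im (cinner x (f m x - f n x)) = 0 \<and> 0 \<le> Re (cinner x (f m x - f n x))) sequentially" for x
    proof -
      have "\<forall>m\<ge>n. Im (cinner x (f m x - f n x)) = 0 \<and> 0 \<le> Re (cinner x (f m x - f n x))"
        using incr_le[of f, OF inc fb] unfolding op_le_def pos_op_def by auto
      then show ?thesis unfolding eventually_sequentially by blast
    qed
  qed
  have "op_le g u" if "u \<in> A" "\<forall>n. op_le (f n) u" for u
    unfolding op_le_def
  proof (rule pos_limit[where F = "\<lambda>m x. u x - f m x"])
    show "bop (\<lambda>x. u x - g x)" using inA_bop[OF that(1)] gb by (rule bop_diff)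
    show "(\<lambda>m. u x - f m x) \<longlonglongrightarrow> u x - g x" for x using lim by (intro tendsto_intros)
    show "eventually (\<lambda>m. Im (cinner x (u x - f m x)) = 0 \<and> 0 \<le> Re (cinner x (u x - f m x))) sequentially" for x
      using that(2) unfolding op_le_def pos_op_def by (auto intro: always_eventually)
  qed
  then show "is_lub_in A (range f) g" unfolding is_lub_in_def using gA le by blast
qed

lemma T_strong:
  assumes fA: "\<And>n. f n \<in> A" and fp: "\<And>n. pos_op (f n)" and inc: "\<And>n. op_le (f n) (f (Suc n))"
    and gA: "g \<in> A" and lim: "\<And>v. (\<lambda>n. f n v) \<longlonglongrightarrow> g v"
    and gA': "g' \<in> A" and lim': "\<And>v. (\<lambda>n. T (f n) v) \<longlonglongrightarrow> g' v"
  shows "T g = g'"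
proof -
  have nm: "normal_map A T" using mo unfolding markov_operator_def by blast
  have fb: "\<And>n. bop (f n)" using fA inA_bop by blast
  note L = lub_incr[OF fA inc gA lim]
  have gp: "pos_op g"
  proof -
    have "pos_op (\<lambda>x. (g x - f 0 x) + f 0 x)"
      using L(2)[of 0] fp[of 0] unfolding op_le_def by (rule pos_op_add)
    then show ?thesis by simp
  qed
  obtain K where K: "op_le g (op_smul (complex_of_real K) id)" using pos_le_scalar[OF gp] by blast
  have H: "range f \<subseteq> pos_part A \<and> range f \<noteq> {} \<and>
      (\<forall>a\<in>range f. \<forall>b\<in>range f. \<exists>c\<in>range f. op_le a c \<and> op_le b c) \<and>
      (\<exists>K::real. \<forall>d\<in>range f. op_le d (op_smul (complex_of_real K) id)) \<and> is_lub_in A (range f) g"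
  proof (intro conjI)
    show "range f \<subseteq> pos_part A" using fA fp unfolding pos_part_def by blast
    show "range f \<noteq> {}" by simp
    show "\<forall>a\<in>range f. \<forall>b\<in>range f. \<exists>c\<in>range f. op_le a c \<and> op_le b c"
    proof (intro ballI)
      fix a b assume "a \<in> range f" "b \<in> range f"
      then obtain i j where ij: "a = f i" "b = f j" by blast
      have "op_le (f i) (f (max i j))" "op_le (f j) (f (max i j))"
        using incr_le[of f, OF inc fb] by simp_all
      then show "\<exists>c\<in>range f. op_le a c \<and> op_le b c" unfolding ij by blast
    qed
    show "\<exists>K::real. \<forall>d\<in>range f. op_le d (op_smul (complex_of_real K) id)"
    proof (intro exI ballI)
      fix d assume "d \<in> range f"
      then obtain i where "d = f i" by blast
      then show "op_le d (op_smul (complex_of_real K) id)" using op_le_trans[OF L(2)[of i] K] by simp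
    qed
    show "is_lub_in A (range f) g" by (rule L(1))
  qed
  have H1: "is_lub_in A (T ` range f) (T g)"
    using mp[OF spec[OF spec[OF nm[unfolded normal_map_def], of "range f"], of g] H] .
  have H2: "is_lub_in A (range (\<lambda>n. T (f n))) g'"
    using lub_incr(1)[OF T_in[OF fA] T_mono[OF fA fA inc] gA' lim'] .
  have "T ` range f = range (\<lambda>n. T (f n))" by (simp add: image_image)
  then show ?thesis using lub_unique[OF H1] H2 by simp
qed

end




context mk begin

lemma vigier:
  assumes aA: "\<And>n. a n \<in> A" and ap: "\<And>n. pos_op (a n)" and dec: "\<And>n. op_le (a (Suc n)) (a n)"
  shows "\<exists>h\<in>A. pos_op h \<and> (\<forall>v. (\<lambda>n. a n v) \<longlonglongrightarrow> h v) \<and> (\<forall>n. op_le h (a n))"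
proof -
  have ab: "\<And>n. bop (a n)" using aA inA_bop by blast
  have decle: "op_le (a n) (a m)" if "m \<le> n" for m n
  proof -
    have "op_le (a (m + k)) (a m)" for k
    proof (induction k)
      case 0 then show ?case by (simp add: op_le_refl)
    next
      case (Suc k) then show ?case using op_le_trans dec[of "m+k"] by simp
    qed
    then show ?thesis using that le_Suc_ex by blast
  qed
  obtain K where K: "K \<ge> 0" "\<forall>w. Re (cinner w (a 0 w)) \<le> K * (norm w)\<^sup>2"
    using bop_cinner_bound[OF ab[of 0]] by blast
  have rle: "Re (cinner w (a n w)) \<le> Re (cinner w (a m w))" if "m \<le> n" for m n w
  proof -
    have "0 \<le> Re (cinner w (a m w - a n w))"
      using decle[OF that] unfolding op_le_def pos_op_def by auto
    then show ?thesis by (simp add: cinner_diff_right)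
  qed
  have rnn: "0 \<le> Re (cinner w (a n w))" for n w using ap[of n] by (rule pos_opD)
  have diffb: "(norm (a m v - a n v))\<^sup>2 \<le> K * (Re (cinner v (a m v)) - Re (cinner v (a n v)))"
    if "m \<le> n" for m n v
  proof -
    have p: "pos_op (\<lambda>x. a m x - a n x)" using decle[OF that] unfolding op_le_def .
    have "Re (cinner w ((\<lambda>x. a m x - a n x) w)) \<le> K * (norm w)\<^sup>2" for w
    proof -
      have "Re (cinner w ((\<lambda>x. a m x - a n x) w)) = Re (cinner w (a m w)) - Re (cinner w (a n w))"
        by (simp add: cinner_diff_right)
      also have "\<dots> \<le> Re (cinner w (a 0 w))" using rle[of 0 m w] rnn[of w n] by simp
      also have "\<dots> \<le> K * (norm w)\<^sup>2" using K(2) by blast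
      finally show ?thesis .
    qed
    from pos_key[OF p this, of v] show ?thesis by (simp add: cinner_diff_right)
  qed
  have nb: "norm (a n x) \<le> K * norm x" for n x
  proof -
    have "Re (cinner w (a n w)) \<le> K * (norm w)\<^sup>2" for w
      using rle[of 0 n w] K(2)[rule_format, of w] by linarith
    from pos_key[OF ap[of n] this, of x]
    have "(norm (a n x))\<^sup>2 \<le> K * Re (cinner x (a n x))" .
    also have "\<dots> \<le> K * (K * (norm x)\<^sup>2)"
      using rle[of 0 n x] K(2)[rule_format, of x] K(1) by (intro mult_left_mono) auto
    also have "\<dots> = (K * norm x)\<^sup>2" by (simp add: power2_eq_square)
    finally show ?thesis by (rule power2_le_imp_le[OF _ mult_nonneg_nonneg[OF K(1) norm_ge_zero]])
  qed
  have conv: "convergent (\<lambda>n. a n v)" for v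
  proof -
    define r where "r n = Re (cinner v (a n v))" for n
    have "decseq r" unfolding r_def by (rule decseq_SucI) (rule rle, simp)
    then obtain L where "r \<longlonglongrightarrow> L" using decseq_convergent[of r 0] rnn unfolding r_def by blast
    then have cr: "Cauchy r" by (intro convergent_Cauchy convergentI)
    have "Cauchy (\<lambda>n. a n v)"
    proof (rule CauchyI)
      fix e :: real assume e: "e > 0"
      then have "e\<^sup>2 / (K + 1) > 0" using K(1) by simp
      from CauchyD[OF cr this] obtain M where M: "\<forall>m\<ge>M. \<forall>n\<ge>M. norm (r m - r n) < e\<^sup>2 / (K + 1)"
        by blast
      have *: "norm (a m v - a n v) < e" if "m \<ge> M" "n \<ge> M" "m \<le> n" for m n
      proof -
        have "(norm (a m v - a n v))\<^sup>2 \<le> K * (r m - r n)" using diffb[OF that(3)] unfolding r_def .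
        also have "\<dots> \<le> K * (e\<^sup>2 / (K + 1))"
          using M[rule_format, OF that(1,2)] K(1) by (intro mult_left_mono) auto
        also have "\<dots> < e\<^sup>2" using K(1) e by (simp add: field_simps)
        finally show ?thesis by (rule power2_less_imp_less) (use e in simp)
      qed
      show "\<exists>M. \<forall>m\<ge>M. \<forall>n\<ge>M. norm (a m v - a n v) < e"
      proof (intro exI allI impI)
        fix m n assume "M \<le> m" "M \<le> n"
        show "norm (a m v - a n v) < e"
        proof (cases "m \<le> n")
          case True then show ?thesis using *[of m n] \<open>M \<le> m\<close> \<open>M \<le> n\<close> by blast
        next
          case False
          then have "norm (a n v - a m v) < e" using *[of n m] \<open>M \<le> m\<close> \<open>M \<le> n\<close> by simp
          then show ?thesis by (simp add: norm_minus_commute)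
        qed
      qed
    qed
    then show ?thesis by (simp add: Cauchy_convergent_iff)
  qed
  define h where "h v = lim (\<lambda>n. a n v)" for v
  have lim: "(\<lambda>n. a n v) \<longlonglongrightarrow> h v" for v unfolding h_def using conv convergent_LIMSEQ_iff by blast
  have hb: "bop h" unfolding bop_def
  proof (intro conjI allI)
    fix x y
    have "(\<lambda>n. a n (x + y)) \<longlonglongrightarrow> h x + h y"
      using tendsto_add[OF lim[of x] lim[of y]] by (simp add: bopD[OF ab])
    then show "h (x + y) = h x + h y" using lim LIMSEQ_unique by blast
  next
    fix c x
    have "(\<lambda>n. a n (cscale c x)) \<longlonglongrightarrow> cscale c (h x)"
      using bounded_linear.tendsto[OF bounded_linear_cscale lim[of x]] by (simp add: bopD[OF ab])
    then show "h (cscale c x) = cscale c (h x)" using lim LIMSEQ_unique by blast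
  next
    have "norm (h x) \<le> K * norm x" for x
      using tendsto_norm[OF lim[of x]] nb by (intro tendsto_upperbound) (auto intro: always_eventually)
    then show "\<exists>K. \<forall>x. norm (h x) \<le> K * norm x" by blast
  qed
  have hA: "h \<in> A" using inA_limit[OF hb lim aA] .
  have hp: "pos_op h"
  proof (rule pos_limit[OF hb lim])
    fix x
    show "eventually (\<lambda>n. Im (cinner x (a n x)) = 0 \<and> 0 \<le> Re (cinner x (a n x))) sequentially"
      using pos_opD(2,3)[OF ap] by (intro always_eventually) blast
  qed
  have hle: "op_le h (a n)" for n
    unfolding op_le_def
  proof (rule pos_limit[where F = "\<lambda>m x. a n x - a m x"])
    show "bop (\<lambda>x. a n x - h x)" using ab hb by (rule bop_diff)
    show "(\<lambda>m. a n x - a m x) \<longlonglongrightarrow> a n x - h x" for x using lim by (intro tendsto_intros)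
    show "eventually (\<lambda>m. Im (cinner x (a n x - a m x)) = 0 \<and> 0 \<le> Re (cinner x (a n x - a m x))) sequentially" for x
    proof -
      have "\<forall>m\<ge>n. Im (cinner x (a n x - a m x)) = 0 \<and> 0 \<le> Re (cinner x (a n x - a m x))"
        using decle unfolding op_le_def pos_op_def by auto
      then show ?thesis unfolding eventually_sequentially by blast
    qed
  qed
  show ?thesis using hA hp lim hle by blast
qed

end



context mk begin

lemma T_zero: "T (\<lambda>x. 0) = (\<lambda>x. 0)"
  using T_scale[OF id_in, of 0] by simp

lemma Tn_Suc': "(T ^^ n) (T X) = (T ^^ Suc n) X"
  by (simp add: funpow_swap1)

lemma pot_fwd:
  assumes "potential A T y"
  shows "op_le (T y) y" "\<forall>v. (\<lambda>n. (T ^^ n) y v) \<longlonglongrightarrow> 0"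
proof -
  obtain x where xs: "T_summable A T x" and ser: "sot_series_to T x y"
    using assms unfolding potential_def by blast
  have xA: "x \<in> A" and xp: "pos_op x" using xs unfolding T_summable_def pos_part_def by auto
  have yA: "y \<in> A" and yp: "pos_op y" using assms unfolding potential_def pos_part_def by auto
  define S where "S N = (\<lambda>v. \<Sum>n<N. (T ^^ n) x v)" for N
  have S0: "S 0 = (\<lambda>v. 0)" unfolding S_def by simp
  have SS: "S (Suc N) = (\<lambda>v. S N v + (T ^^ N) x v)" for N unfolding S_def by simp
  have SA: "S N \<in> A" for N
    by (induction N) (simp_all add: S0 SS inA_zero inA_add Tn_in xA)
  have Sp: "pos_op (S N)" for N
    by (induction N) (simp_all add: S0 SS pos_op_zero pos_op_add Tn_pos xA xp)
  have Sinc: "op_le (S N) (S (Suc N))" for N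
  proof -
    have "(\<lambda>v. S (Suc N) v - S N v) = (T ^^ N) x" by (simp add: SS)
    then show ?thesis unfolding op_le_def using Tn_pos[OF xA xp] by simp
  qed
  have Slim: "(\<lambda>N. S N v) \<longlonglongrightarrow> y v" for v using ser unfolding sot_series_to_def S_def by blast
  have TS: "T (S N) = (\<lambda>v. \<Sum>n<N. (T ^^ Suc n) x v)" for N
  proof (induction N)
    case 0 then show ?case by (simp add: S0 T_zero)
  next
    case (Suc N)
    have "T (S (Suc N)) = (\<lambda>v. T (S N) v + T ((T ^^ N) x) v)"
      unfolding SS by (rule T_add[OF SA Tn_in[OF xA]])
    then show ?case using Suc by simp
  qed
  have Ssh: "S (Suc N) v = x v + (\<Sum>n<N. (T ^^ Suc n) x v)" for N v
    unfolding S_def by (simp only: sum.lessThan_Suc_shift) simp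
  have TSeq: "T (S N) v = S (Suc N) v - x v" for N v
    unfolding Ssh TS by simp
  have TSlim: "(\<lambda>N. T (S N) v) \<longlonglongrightarrow> y v - x v" for v
    unfolding TSeq by (intro tendsto_intros LIMSEQ_Suc Slim)
  have Ty: "T y = (\<lambda>v. y v - x v)"
    by (rule T_strong[OF SA Sp Sinc yA Slim inA_diff[OF yA xA] TSlim])
  have "(\<lambda>v. y v - T y v) = x" by (simp add: Ty)
  then show "op_le (T y) y" unfolding op_le_def using xp by simp
  have Tny: "(T ^^ n) y = (\<lambda>v. y v - S n v)" for n
  proof (induction n)
    case 0 then show ?case by (simp add: S0)
  next
    case (Suc n)
    have "(T ^^ Suc n) y = T (\<lambda>v. y v - S n v)" using Suc by simp
    also have "\<dots> = (\<lambda>v. T y v - T (S n) v)" by (rule T_diff[OF yA SA])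
    also have "\<dots> = (\<lambda>v. y v - S (Suc n) v)" unfolding Ty TSeq by (simp add: algebra_simps)
    finally show ?case .
  qed
  show "\<forall>v. (\<lambda>n. (T ^^ n) y v) \<longlonglongrightarrow> 0"
  proof
    fix v
    have "(\<lambda>n. y v - S n v) \<longlonglongrightarrow> y v - y v" by (intro tendsto_intros Slim)
    then show "(\<lambda>n. (T ^^ n) y v) \<longlonglongrightarrow> 0" unfolding Tny by simp
  qed
qed

lemma pot_bwd:
  assumes yP: "y \<in> pos_part A" and le: "op_le (T y) y" and lim: "\<forall>v. (\<lambda>n. (T ^^ n) y v) \<longlonglongrightarrow> 0"
  shows "potential A T y"
proof -
  have yA: "y \<in> A" using yP unfolding pos_part_def by auto
  define x where "x = (\<lambda>v. y v - T y v)"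
  have xA: "x \<in> A" unfolding x_def by (rule inA_diff[OF yA T_in[OF yA]])
  have xp: "pos_op x" using le unfolding op_le_def x_def .
  have Tnx: "(T ^^ n) x = (\<lambda>v. (T ^^ n) y v - (T ^^ Suc n) y v)" for n
    unfolding x_def Tn_diff[OF yA T_in[OF yA]] Tn_Suc' ..
  have ser: "sot_series_to T x y" unfolding sot_series_to_def
  proof
    fix v
    have "(\<Sum>n<N. (T ^^ n) x v) = (T ^^ 0) y v - (T ^^ N) y v" for N
      unfolding Tnx by (rule sum_lessThan_telescope')
    then have "(\<lambda>N. \<Sum>n<N. (T ^^ n) x v) = (\<lambda>N. y v - (T ^^ N) y v)" by simp
    moreover have "(\<lambda>N. y v - (T ^^ N) y v) \<longlonglongrightarrow> y v - 0" using lim by (intro tendsto_intros) auto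
    ultimately show "(\<lambda>N. \<Sum>n<N. (T ^^ n) x v) \<longlonglongrightarrow> y v" by simp
  qed
  have "T_summable A T x" unfolding T_summable_def using xA xp yP ser by (auto simp: pos_part_def)
  then show ?thesis unfolding potential_def using yP ser by blast
qed

lemma supharm_decomp:
  assumes aP: "a \<in> pos_part A" and le: "op_le (T a) a"
  shows "\<exists>y h. potential A T y \<and> h \<in> A \<and> pos_op h \<and> T h = h \<and> a = op_add y h"
proof -
  have aA: "a \<in> A" and ap: "pos_op a" using aP unfolding pos_part_def by auto
  have anA: "(T ^^ n) a \<in> A" for n using Tn_in[OF aA] .
  have anp: "pos_op ((T ^^ n) a)" for n using Tn_pos[OF aA ap] .
  have dec: "op_le ((T ^^ Suc n) a) ((T ^^ n) a)" for n
    using Tn_mono[OF T_in[OF aA] aA le, of n] unfolding Tn_Suc' .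
  have lea: "op_le ((T ^^ n) a) a" for n
  proof (induction n)
    case 0 then show ?case by (simp add: op_le_refl)
  next
    case (Suc n) then show ?case using op_le_trans[OF dec[of n]] by blast
  qed
  obtain h where hA: "h \<in> A" and hp: "pos_op h" and hlim: "\<forall>v. (\<lambda>n. (T ^^ n) a v) \<longlonglongrightarrow> h v"
    and hle: "\<forall>n. op_le h ((T ^^ n) a)"
    using vigier[of "\<lambda>n. (T ^^ n) a", OF anA anp dec] by blast
  define f where "f n = (\<lambda>v. a v - (T ^^ n) a v)" for n
  have fA: "f n \<in> A" for n unfolding f_def by (rule inA_diff[OF aA anA])
  have fp: "pos_op (f n)" for n using lea[of n] unfolding f_def op_le_def .
  have finc: "op_le (f n) (f (Suc n))" for n
  proof -
    have "(\<lambda>v. f (Suc n) v - f n v) = (\<lambda>v. (T ^^ n) a v - (T ^^ Suc n) a v)"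
      unfolding f_def by (simp add: algebra_simps del: funpow.simps)
    then show ?thesis using dec[of n] unfolding op_le_def by simp
  qed
  have flim: "(\<lambda>n. f n v) \<longlonglongrightarrow> a v - h v" for v
    unfolding f_def using hlim by (intro tendsto_intros) auto
  have Tf: "T (f n) = (\<lambda>v. T a v - (T ^^ Suc n) a v)" for n
    unfolding f_def T_diff[OF aA anA] by simp
  have Tflim: "(\<lambda>n. T (f n) v) \<longlonglongrightarrow> T a v - h v" for v
    unfolding Tf using hlim by (intro tendsto_intros LIMSEQ_Suc) auto
  have "T (\<lambda>v. a v - h v) = (\<lambda>v. T a v - h v)"
    by (rule T_strong[OF fA fp finc inA_diff[OF aA hA] flim inA_diff[OF T_in[OF aA] hA] Tflim])
  then have "(\<lambda>v. T a v - T h v) = (\<lambda>v. T a v - h v)" using T_diff[OF aA hA] by simp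
  then have Th: "T h = h" by (metis (no_types, lifting) ext diff_left_imp_eq)
  define y where "y = (\<lambda>v. a v - h v)"
  have yA: "y \<in> A" unfolding y_def by (rule inA_diff[OF aA hA])
  have yp: "pos_op y" using hle[rule_format, of 0] unfolding y_def op_le_def by simp
  have Ty: "T y = (\<lambda>v. T a v - h v)" unfolding y_def T_diff[OF aA hA] Th ..
  have "(\<lambda>v. y v - T y v) = (\<lambda>v. (a v - h v) - (T a v - h v))" unfolding Ty by (simp add: y_def)
  also have "\<dots> = (\<lambda>v. a v - T a v)" by simp
  finally have "(\<lambda>v. y v - T y v) = (\<lambda>v. a v - T a v)" .
  then have yle: "op_le (T y) y" using le unfolding op_le_def by simp
  have Tny: "(T ^^ n) y = (\<lambda>v. (T ^^ n) a v - h v)" for n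
    unfolding y_def Tn_diff[OF aA hA] Tn_fix[OF Th] ..
  have ylim: "\<forall>v. (\<lambda>n. (T ^^ n) y v) \<longlonglongrightarrow> 0"
  proof
    fix v
    have "(\<lambda>n. (T ^^ n) a v - h v) \<longlonglongrightarrow> h v - h v" using hlim by (intro tendsto_intros) auto
    then show "(\<lambda>n. (T ^^ n) y v) \<longlonglongrightarrow> 0" unfolding Tny by simp
  qed
  have pot: "potential A T y"
    by (rule pot_bwd) (use yA yp yle ylim in \<open>auto simp: pos_part_def\<close>)
  have "a = op_add y h" unfolding op_add_def y_def by simp
  then show ?thesis using pot hA hp Th by blast
qed

lemma decomp_supharm:
  assumes "potential A T y" "h \<in> A" "T h = h"
  shows "op_le (T (op_add y h)) (op_add y h)"
proof -
  have yA: "y \<in> A" using assms(1) unfolding potential_def pos_part_def by auto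
  have "T (op_add y h) = (\<lambda>x. T y x + h x)"
    unfolding op_add_def T_add[OF yA assms(2)] assms(3) ..
  then have "(\<lambda>x. op_add y h x - T (op_add y h) x) = (\<lambda>x. y x - T y x)"
    unfolding op_add_def by simp
  then show ?thesis using pot_fwd(1)[OF assms(1)] unfolding op_le_def by simp
qed

lemma decomp_unique:
  assumes "potential A T y1" "h1 \<in> A" "T h1 = h1" "a = op_add y1 h1"
    and "potential A T y2" "h2 \<in> A" "T h2 = h2" "a = op_add y2 h2"
  shows "y1 = y2 \<and> h1 = h2"
proof -
  have y1A: "y1 \<in> A" using assms(1) unfolding potential_def pos_part_def by auto
  have y2A: "y2 \<in> A" using assms(5) unfolding potential_def pos_part_def by auto
  have lim: "(\<lambda>n. (T ^^ n) a v) \<longlonglongrightarrow> h v"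
    if "potential A T y" "h \<in> A" "T h = h" "a = op_add y h" "y \<in> A" for y h v
  proof -
    have "(T ^^ n) a = (\<lambda>x. (T ^^ n) y x + h x)" for n
      unfolding that(4) op_add_def Tn_add[OF that(5,2)] Tn_fix[OF that(3)] ..
    moreover have "(\<lambda>n. (T ^^ n) y v + h v) \<longlonglongrightarrow> 0 + h v"
      using pot_fwd(2)[OF that(1)] by (intro tendsto_intros) auto
    ultimately show ?thesis by simp
  qed
  have h: "h1 = h2"
  proof
    fix v
    show "h1 v = h2 v"
      using LIMSEQ_unique[OF lim[OF assms(1-4) y1A] lim[OF assms(5-8) y2A]] .
  qed
  have "y1 = y2"
  proof
    fix v
    have "a v = y1 v + h1 v" "a v = y2 v + h2 v"
      using fun_cong[OF assms(4), of v] fun_cong[OF assms(8), of v] unfolding op_add_def by simp_all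
    then show "y1 v = y2 v" using h by simp
  qed
  then show ?thesis using h by simp
qed

end

theorem theorem3p3:
  fixes \<A> :: "('h::chilbert) op set" and T :: "'h op \<Rightarrow> 'h op"
  assumes "von_neumann_algebra \<A>" and "markov_operator \<A> T"
  shows "(\<forall>y \<in> pos_part \<A>. potential \<A> T y \<longleftrightarrow>
             op_le (T y) y \<and> (\<forall>v. (\<lambda>n. (T ^^ n) y v) \<longlonglongrightarrow> 0))
       \<and> (\<forall>a \<in> pos_part \<A>.
            (op_le (T a) a \<longleftrightarrow>
               (\<exists>y h. potential \<A> T y \<and> h \<in> \<A> \<and> pos_op h \<and> T h = h \<and> a = op_add y h))
          \<and> (\<forall>y1 h1 y2 h2.
               potential \<A> T y1 \<and> h1 \<in> \<A> \<and> pos_op h1 \<and> T h1 = h1 \<and> a = op_add y1 h1 \<and>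
               potential \<A> T y2 \<and> h2 \<in> \<A> \<and> pos_op h2 \<and> T h2 = h2 \<and> a = op_add y2 h2
               \<longrightarrow> y1 = y2 \<and> h1 = h2))"
proof -
  interpret M: mk \<A> T using assms by unfold_locales
  have P1: "\<forall>y \<in> pos_part \<A>. potential \<A> T y \<longleftrightarrow>
             op_le (T y) y \<and> (\<forall>v. (\<lambda>n. (T ^^ n) y v) \<longlonglongrightarrow> 0)"
    using M.pot_fwd M.pot_bwd by blast
  have P2: "op_le (T a) a \<longleftrightarrow>
               (\<exists>y h. potential \<A> T y \<and> h \<in> \<A> \<and> pos_op h \<and> T h = h \<and> a = op_add y h)"
    if "a \<in> pos_part \<A>" for a
    using M.supharm_decomp[OF that] M.decomp_supharm by blast
  have P3: "y1 = y2 \<and> h1 = h2"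
    if "potential \<A> T y1 \<and> h1 \<in> \<A> \<and> pos_op h1 \<and> T h1 = h1 \<and> a = op_add y1 h1 \<and>
               potential \<A> T y2 \<and> h2 \<in> \<A> \<and> pos_op h2 \<and> T h2 = h2 \<and> a = op_add y2 h2"
    for a y1 h1 y2 h2
    using that M.decomp_unique by blast
  show ?thesis using P1 P2 P3 by blast
qed


end
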